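(* Let $p\in(0,1)$, let $\mathbf{W}=(w_{i,j})$ be a fixed (deterministic) $m\times n$ real matrix, and let $\mathbf{x}=(x_1,\dots,x_n)$ be a random vector with finite second moments. Fix an output index $i$ and assume $\mathrm{Var}[(\mathbf{W}\mathbf{x})_i]>0$ and $\sum_{j=1}^n w_{i,j}^2\,\mathbb{E}[x_j^2]>0$. Then for the $i$th output coordinate, $$\Delta\big(\mathbf{W}\,\mathrm{Dropout}(\mathbf{x})\big)<1,$$ and $$\Delta\big(\mathrm{Dropout}(\mathbf{W}\mathbf{x})\big)<\Delta\big(\mathbf{W}\,\mathrm{Dropout}(\mathbf{x})\big)$$ holds if and only if $\sum_{j=1}^n\sum_{k\neq j} w_{i,j}w_{i,k}\,\mathbb{E}[x_jx_k]>0$.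
   Context: Dropout with keep probability $p\in(0,1)$: $\mathrm{Dropout}_{\mathrm{train}}(\mathbf{v})=\frac1p\mathbf{M}\mathbf{v}$, $\mathrm{Dropout}_{\mathrm{test}}(\mathbf{v})=\mathbf{v}$, where $\mathbf{M}$ is a diagonal matrix (of the size of $\mathbf{v}$) with i.i.d. $\mathrm{Bernoulli}(p)$ diagonal entries, independent of $\mathbf{x}$. For an operation $f$ having a training version $f_{\mathrm{train}}$ and a test version $f_{\mathrm{test}}$, the inconsistency ratio of its $i$th output coordinate is $\Delta(f(\mathbf{x}))=\mathrm{Var}[f_{\mathrm{test}}(\mathbf{x})_i]/\mathrm{Var}[f_{\mathrm{train}}(\mathbf{x})_i]$, where variances are taken over the joint randomness of $\mathbf{x}$ and the dropout mask. "PostDropout" is $\mathrm{Dropout}(\mathbf{W}\mathbf{x})$ (mask applied to the output, of size $m$) and "PreDropout" is $\mathbf{W}\,\mathrm{Dropout}(\mathbf{x})$ (mask applied to the input, of size $n$). *)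

theory Defs
  imports "HOL-Probability.Probability"
begin

definition bernoulli_rv :: "'a measure \<Rightarrow> real \<Rightarrow> ('a \<Rightarrow> real) \<Rightarrow> bool" where
  "bernoulli_rv M p Z \<longleftrightarrow>
     Z \<in> borel_measurable M \<and>
     (AE \<omega> in M. Z \<omega> = 0 \<or> Z \<omega> = 1) \<and>
     measure M {\<omega> \<in> space M. Z \<omega> = 1} = p"

text \<open>A dropout mask of size d: i.i.d. Bernoulli(p) diagonal entries, independent of
  the random vector x (given by its n coordinates).\<close>
definition dropout_mask ::
  "'a measure \<Rightarrow> real \<Rightarrow> nat \<Rightarrow> (nat \<Rightarrow> 'a \<Rightarrow> real) \<Rightarrow> nat \<Rightarrow> (nat \<Rightarrow> 'a \<Rightarrow> real) \<Rightarrow> bool" where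
  "dropout_mask M p d B n x \<longleftrightarrow>
     (\<forall>j<d. bernoulli_rv M p (B j)) \<and>
     prob_space.indep_vars M (\<lambda>_. borel) B {..<d} \<and>
     prob_space.indep_var M
        (PiM {..<n} (\<lambda>_. borel)) (\<lambda>\<omega>. \<lambda>j\<in>{..<n}. x j \<omega>)
        (PiM {..<d} (\<lambda>_. borel)) (\<lambda>\<omega>. \<lambda>j\<in>{..<d}. B j \<omega>)"

definition incons_ratio :: "'a measure \<Rightarrow> ('a \<Rightarrow> real) \<Rightarrow> ('a \<Rightarrow> real) \<Rightarrow> real" where
  "incons_ratio M f_test f_train = prob_space.variance M f_test / prob_space.variance M f_train"

end

theory Submission imports Defs begin

lemma absprod: fixes a b :: real shows "norm (a * b) \<le> norm (a\<^sup>2 + b\<^sup>2)"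
proof -
  have "2 * \<bar>a\<bar> * \<bar>b\<bar> \<le> \<bar>a\<bar>\<^sup>2 + \<bar>b\<bar>\<^sup>2" by (rule sum_squares_bound)
  then have "2 * \<bar>a * b\<bar> \<le> a\<^sup>2 + b\<^sup>2" by (simp add: abs_mult)
  moreover have "0 \<le> \<bar>a * b\<bar>" by simp
  moreover have "0 \<le> a\<^sup>2 + b\<^sup>2" by simp
  ultimately show ?thesis by simp
qed

lemma final_arith:
  fixes q S C a V :: real
  assumes "q > 1" "S > 0" "V = S + C - a" "V > 0" "a \<ge> 0"
  shows "V / (q*S + C - a) < 1 \<and> (V / (q*(S+C) - a) < V / (q*S + C - a) \<longleftrightarrow> C > 0)"
proof -
  have d1: "q*S + C - a = V + (q-1)*S" using assms by (simp add: algebra_simps)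
  have p1: "(q-1)*S > 0" using assms by simp
  have d2: "q*(S+C) - a = V + (q-1)*(S+C)" using assms by (simp add: algebra_simps)
  have sc: "S + C > 0" using assms by linarith
  have p2: "(q-1)*(S+C) > 0" using assms sc by simp
  have "0 < q*S + C - a" "V < q*S + C - a" using d1 p1 assms by linarith+
  then have "V / (q*S + C - a) < 1" by simp
  moreover have "V / (q*(S+C) - a) < V / (q*S + C - a) \<longleftrightarrow> q*S + C - a < q*(S+C) - a"
  proof -
    have D1: "q*S + C - a > 0" and D2: "q*(S+C) - a > 0" using d1 d2 p1 p2 assms by linarith+
    have "V / (q*(S+C) - a) < V / (q*S + C - a) \<longleftrightarrow> V * (q*S + C - a) < V * (q*(S+C) - a)"
      using D1 D2 by (simp add: field_simps)
    also have "\<dots> \<longleftrightarrow> q*S + C - a < q*(S+C) - a" using assms(4) by simp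
    finally show ?thesis .
  qed
  moreover have "q*S + C - a < q*(S+C) - a \<longleftrightarrow> C > 0"
  proof -
    have "q*S + C - a < q*(S+C) - a \<longleftrightarrow> 0 < (q-1)*C" by (simp add: algebra_simps)
    also have "\<dots> \<longleftrightarrow> C > 0" using assms(1) by (simp add: zero_less_mult_iff)
    finally show ?thesis .
  qed
  ultimately show ?thesis by simp
qed

lemma (in prob_space) indep_expect:
  fixes f :: "'b \<Rightarrow> real" and g :: "'b \<Rightarrow> real"
  assumes "indep_var MA X MB Y" "f \<in> borel_measurable MA" "g \<in> borel_measurable MB"
    "integrable M (\<lambda>\<omega>. f (X \<omega>))" "integrable M (\<lambda>\<omega>. g (Y \<omega>))"
  shows "expectation (\<lambda>\<omega>. f (X \<omega>) * g (Y \<omega>)) = expectation (\<lambda>\<omega>. f (X \<omega>)) * expectation (\<lambda>\<omega>. g (Y \<omega>))"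
    and "integrable M (\<lambda>\<omega>. f (X \<omega>) * g (Y \<omega>))"
proof -
  have "indep_var borel (f \<circ> X) borel (g \<circ> Y)" by (rule indep_var_compose[OF assms(1-3)])
  then show "expectation (\<lambda>\<omega>. f (X \<omega>) * g (Y \<omega>)) = expectation (\<lambda>\<omega>. f (X \<omega>)) * expectation (\<lambda>\<omega>. g (Y \<omega>))"
    and "integrable M (\<lambda>\<omega>. f (X \<omega>) * g (Y \<omega>))"
    using indep_var_lebesgue_integral[of "f \<circ> X" "g \<circ> Y"] indep_var_integrable[of "f \<circ> X" "g \<circ> Y"] assms
    by (simp_all add: comp_def)
qed

lemma (in prob_space) bern:
  assumes "bernoulli_rv M p Z"
  shows "integrable M Z" "expectation Z = p" "AE \<omega> in M. Z \<omega> * Z \<omega> = Z \<omega>"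
    "AE \<omega> in M. Z \<omega> = 0 \<or> Z \<omega> = 1"
proof -
  have m[measurable]: "Z \<in> borel_measurable M" and ae: "AE \<omega> in M. Z \<omega> = 0 \<or> Z \<omega> = 1"
    and pr: "measure M {\<omega> \<in> space M. Z \<omega> = 1} = p" using assms unfolding bernoulli_rv_def by auto
  have "AE \<omega> in M. norm (Z \<omega>) \<le> 1" using ae by eventually_elim auto
  then show "integrable M Z" by (intro integrable_const_bound) auto
  have "AE \<omega> in M. Z \<omega> = indicator {\<omega> \<in> space M. Z \<omega> = 1} \<omega>"
    using ae AE_space by eventually_elim (auto simp: indicator_def)
  then have "expectation Z = expectation (indicator {\<omega> \<in> space M. Z \<omega> = 1})"
    by (intro integral_cong_AE) auto
  also have "\<dots> = p" using pr by (simp add: Int_absorb2)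
  finally show "expectation Z = p" .
  show "AE \<omega> in M. Z \<omega> * Z \<omega> = Z \<omega>" using ae by eventually_elim auto
  show "AE \<omega> in M. Z \<omega> = 0 \<or> Z \<omega> = 1" by (fact ae)
qed

lemma (in prob_space) sq_int_prod:
  fixes f g :: "'a \<Rightarrow> real"
  assumes [measurable]: "f \<in> borel_measurable M" "g \<in> borel_measurable M"
    and "integrable M (\<lambda>\<omega>. (f \<omega>)\<^sup>2)" "integrable M (\<lambda>\<omega>. (g \<omega>)\<^sup>2)"
  shows "integrable M (\<lambda>\<omega>. f \<omega> * g \<omega>)"
proof (rule Bochner_Integration.integrable_bound[of _ "\<lambda>\<omega>. (f \<omega>)\<^sup>2 + (g \<omega>)\<^sup>2"])
  show "integrable M (\<lambda>\<omega>. (f \<omega>)\<^sup>2 + (g \<omega>)\<^sup>2)" using assms by auto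
  show "(\<lambda>\<omega>. f \<omega> * g \<omega>) \<in> borel_measurable M" by measurable
  show "AE \<omega> in M. norm (f \<omega> * g \<omega>) \<le> norm ((f \<omega>)\<^sup>2 + (g \<omega>)\<^sup>2)"
    by (intro AE_I2 absprod)
qed


lemma (in prob_space) dsum_int:
  fixes g :: "nat \<Rightarrow> nat \<Rightarrow> 'a \<Rightarrow> real" and a :: "nat \<Rightarrow> nat \<Rightarrow> real"
  assumes "\<And>j k. j<n \<Longrightarrow> k<n \<Longrightarrow> integrable M (g j k)"
  shows "integrable M (\<lambda>\<omega>. \<Sum>j<n. \<Sum>k<n. a j k * g j k \<omega>)"
    and "expectation (\<lambda>\<omega>. \<Sum>j<n. \<Sum>k<n. a j k * g j k \<omega>) = (\<Sum>j<n. \<Sum>k<n. a j k * expectation (g j k))"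
proof -
  have i1: "integrable M (\<lambda>\<omega>. \<Sum>k<n. a j k * g j k \<omega>)" if "j<n" for j
    using that by (intro Bochner_Integration.integrable_sum Bochner_Integration.integrable_mult_right assms) auto
  show "integrable M (\<lambda>\<omega>. \<Sum>j<n. \<Sum>k<n. a j k * g j k \<omega>)"
    by (rule Bochner_Integration.integrable_sum) (rule i1, simp)
  have "expectation (\<lambda>\<omega>. \<Sum>j<n. \<Sum>k<n. a j k * g j k \<omega>) = (\<Sum>j<n. expectation (\<lambda>\<omega>. \<Sum>k<n. a j k * g j k \<omega>))"
    using i1 by (intro Bochner_Integration.integral_sum) auto
  also have "\<dots> = (\<Sum>j<n. \<Sum>k<n. a j k * expectation (g j k))"
  proof (intro sum.cong refl)
    fix j assume "j \<in> {..<n}"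
    then have "expectation (\<lambda>\<omega>. \<Sum>k<n. a j k * g j k \<omega>) = (\<Sum>k<n. expectation (\<lambda>\<omega>. a j k * g j k \<omega>))"
      by (intro Bochner_Integration.integral_sum Bochner_Integration.integrable_mult_right assms) auto
    then show "expectation (\<lambda>\<omega>. \<Sum>k<n. a j k * g j k \<omega>) = (\<Sum>k<n. a j k * expectation (g j k))"
      by simp
  qed
  finally show "expectation (\<lambda>\<omega>. \<Sum>j<n. \<Sum>k<n. a j k * g j k \<omega>) = (\<Sum>j<n. \<Sum>k<n. a j k * expectation (g j k))" .
qed

theorem proposition2:
  fixes M :: "'a measure" and p :: real and m n i :: nat
    and W :: "nat \<Rightarrow> nat \<Rightarrow> real"
    and x :: "nat \<Rightarrow> 'a \<Rightarrow> real"
    and Bin :: "nat \<Rightarrow> 'a \<Rightarrow> real"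
    and Bout :: "nat \<Rightarrow> 'a \<Rightarrow> real"
  assumes "prob_space M"
    and "0 < p" "p < 1"
    and "i < m"
    and "\<And>j. j < n \<Longrightarrow> x j \<in> borel_measurable M"
    and "\<And>j. j < n \<Longrightarrow> integrable M (\<lambda>\<omega>. (x j \<omega>)\<^sup>2)"
    and "dropout_mask M p n Bin n x"
    and "dropout_mask M p m Bout n x"
    and "prob_space.variance M (\<lambda>\<omega>. \<Sum>j<n. W i j * x j \<omega>) > 0"
    and "(\<Sum>j<n. (W i j)\<^sup>2 * prob_space.expectation M (\<lambda>\<omega>. (x j \<omega>)\<^sup>2)) > 0"
  shows "incons_ratio M (\<lambda>\<omega>. \<Sum>j<n. W i j * x j \<omega>)
                        (\<lambda>\<omega>. \<Sum>j<n. W i j * ((1 / p) * Bin j \<omega> * x j \<omega>)) < 1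
       \<and> (incons_ratio M (\<lambda>\<omega>. \<Sum>j<n. W i j * x j \<omega>)
                        (\<lambda>\<omega>. (1 / p) * Bout i \<omega> * (\<Sum>j<n. W i j * x j \<omega>))
            < incons_ratio M (\<lambda>\<omega>. \<Sum>j<n. W i j * x j \<omega>)
                        (\<lambda>\<omega>. \<Sum>j<n. W i j * ((1 / p) * Bin j \<omega> * x j \<omega>))
          \<longleftrightarrow> (\<Sum>j<n. \<Sum>k\<in>{..<n} - {j}. W i j * W i k * prob_space.expectation M (\<lambda>\<omega>. x j \<omega> * x k \<omega>)) > 0)"
proof -
  interpret prob_space M by fact
  define w where "w = (\<lambda>j. W i j)"
  define Xv where "Xv = (\<lambda>\<omega>. \<lambda>j\<in>{..<n}. x j \<omega>)"
  define Bv where "Bv = (\<lambda>\<omega>. \<lambda>j\<in>{..<n}. Bin j \<omega>)"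
  define Cv where "Cv = (\<lambda>\<omega>. \<lambda>j\<in>{..<m}. Bout j \<omega>)"
  have bin: "\<And>j. j<n \<Longrightarrow> bernoulli_rv M p (Bin j)" and indB: "indep_vars (\<lambda>_. borel) Bin {..<n}"
    and iXB: "indep_var (PiM {..<n} (\<lambda>_. borel)) Xv (PiM {..<n} (\<lambda>_. borel)) Bv"
    using assms(7) unfolding dropout_mask_def Xv_def Bv_def by auto
  have bout: "bernoulli_rv M p (Bout i)"
    and iXC: "indep_var (PiM {..<n} (\<lambda>_. borel)) Xv (PiM {..<m} (\<lambda>_. borel)) Cv"
    using assms(8) assms(4) unfolding dropout_mask_def Xv_def Cv_def by auto
  note xm[measurable] = assms(5)
  have Bm[measurable]: "\<And>j. j<n \<Longrightarrow> Bin j \<in> borel_measurable M" using bin unfolding bernoulli_rv_def by auto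
  have Cm[measurable]: "Bout i \<in> borel_measurable M" using bout unfolding bernoulli_rv_def by auto
  have xint: "\<And>j. j<n \<Longrightarrow> integrable M (x j)"
    by (rule square_integrable_imp_integrable[OF assms(5) assms(6)])
  have xxint: "\<And>j k. j<n \<Longrightarrow> k<n \<Longrightarrow> integrable M (\<lambda>\<omega>. x j \<omega> * x k \<omega>)"
    by (intro sq_int_prod assms(5) assms(6))
  have EB: "\<And>j. j<n \<Longrightarrow> expectation (Bin j) = p" using bern(2)[OF bin] .
  have EBB: "expectation (\<lambda>\<omega>. Bin j \<omega> * Bin k \<omega>) = (if j = k then p else p\<^sup>2)"
    if "j<n" "k<n" for j k
  proof (cases "j = k")
    case True
    have "expectation (\<lambda>\<omega>. Bin j \<omega> * Bin k \<omega>) = expectation (Bin j)"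
      using bern(3)[OF bin[OF that(1)]] True Bm[OF that(1)] by (intro integral_cong_AE) auto
    then show ?thesis using EB that True by simp
  next
    case False
    have "expectation (\<lambda>\<omega>. \<Prod>l\<in>{j,k}. Bin l \<omega>) = (\<Prod>l\<in>{j,k}. expectation (Bin l))"
      using that bern(1)[OF bin]
      by (intro indep_vars_lebesgue_integral indep_vars_subset[OF indB]) auto
    then show ?thesis using False EB that by (simp add: power2_eq_square)
  qed
  have mc: "(\<lambda>v. v j) \<in> borel_measurable (PiM I (\<lambda>_. borel))" if "j \<in> I" for j and I :: "nat set"
    using that by (rule measurable_component_singleton)
  have EBx: "expectation (\<lambda>\<omega>. x j \<omega> * Bin j \<omega>) = expectation (x j) * p"
     and EBxi: "integrable M (\<lambda>\<omega>. x j \<omega> * Bin j \<omega>)" if "j<n" for j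
    using indep_expect[OF iXB, of "\<lambda>v. v j" "\<lambda>v. v j"] that mc[of j "{..<n}"] xint bern(1)[OF bin] EB
    by (simp_all add: Xv_def Bv_def)
  have EBBxx: "expectation (\<lambda>\<omega>. (x j \<omega> * x k \<omega>) * (Bin j \<omega> * Bin k \<omega>)) =
        expectation (\<lambda>\<omega>. x j \<omega> * x k \<omega>) * (if j = k then p else p\<^sup>2)"
     and EBBxxi: "integrable M (\<lambda>\<omega>. (x j \<omega> * x k \<omega>) * (Bin j \<omega> * Bin k \<omega>))" if "j<n" "k<n" for j k
  proof -
    have i1: "integrable M (\<lambda>\<omega>. Bin j \<omega> * Bin k \<omega>)"
    proof (rule integrable_const_bound[where B=1])
      show "AE \<omega> in M. norm (Bin j \<omega> * Bin k \<omega>) \<le> 1"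
        using bern(4)[OF bin[OF that(1)]] bern(4)[OF bin[OF that(2)]] by eventually_elim auto
      show "(\<lambda>\<omega>. Bin j \<omega> * Bin k \<omega>) \<in> borel_measurable M"
        using Bm[OF that(1)] Bm[OF that(2)] by (rule borel_measurable_times)
    qed
    have m1: "(\<lambda>v. v j * v k) \<in> borel_measurable (PiM {..<n} (\<lambda>_. borel :: real measure))"
      using mc[of j "{..<n}"] mc[of k "{..<n}"] that by (intro borel_measurable_times) auto
    note * = indep_expect[OF iXB m1 m1]
    show "expectation (\<lambda>\<omega>. (x j \<omega> * x k \<omega>) * (Bin j \<omega> * Bin k \<omega>)) =
        expectation (\<lambda>\<omega>. x j \<omega> * x k \<omega>) * (if j = k then p else p\<^sup>2)"
      using *(1) that xxint i1 EBB by (simp add: Xv_def Bv_def)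
    show "integrable M (\<lambda>\<omega>. (x j \<omega> * x k \<omega>) * (Bin j \<omega> * Bin k \<omega>))"
      using *(2) that xxint i1 by (simp add: Xv_def Bv_def)
  qed
  define Y where "Y = (\<lambda>\<omega>. \<Sum>j<n. w j * x j \<omega>)"
  define T where "T = (\<lambda>\<omega>. \<Sum>j<n. (w j / p) * (x j \<omega> * Bin j \<omega>))"
  define U where "U = (\<lambda>\<omega>. (1/p) * (Y \<omega> * Bout i \<omega>))"
  define S where "S = (\<Sum>j<n. (w j)\<^sup>2 * expectation (\<lambda>\<omega>. (x j \<omega>)\<^sup>2))"
  define c where "c = (\<lambda>j k. w j * w k * expectation (\<lambda>\<omega>. x j \<omega> * x k \<omega>))"
  define C where "C = (\<Sum>j<n. \<Sum>k\<in>{..<n} - {j}. c j k)"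
  have p0: "p \<noteq> 0" using assms(2) by simp
  have split: "(\<Sum>j<n. \<Sum>k<n. (if j = k then q * c j k else c j k)) = q * S + C" for q
  proof -
    have "(\<Sum>k<n. (if j = k then q * c j k else c j k)) = q * c j j + (\<Sum>k\<in>{..<n}-{j}. c j k)"
      if "j < n" for j
    proof -
      have "(\<Sum>k<n. (if j = k then q * c j k else c j k))
          = (if j = j then q * c j j else c j j) + (\<Sum>k\<in>{..<n}-{j}. (if j = k then q * c j k else c j k))"
        using that by (intro sum.remove) auto
      also have "(\<Sum>k\<in>{..<n}-{j}. (if j = k then q * c j k else c j k)) = (\<Sum>k\<in>{..<n}-{j}. c j k)"
        by (intro sum.cong) auto
      finally show ?thesis by simp
    qed
    then have "(\<Sum>j<n. \<Sum>k<n. (if j = k then q * c j k else c j k))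
        = (\<Sum>j<n. q * c j j + (\<Sum>k\<in>{..<n}-{j}. c j k))" by (intro sum.cong) auto
    also have "\<dots> = q * (\<Sum>j<n. c j j) + C" by (simp add: sum.distrib sum_distrib_left C_def)
    also have "(\<Sum>j<n. c j j) = S" by (simp add: S_def c_def power2_eq_square)
    finally show ?thesis .
  qed
  have Yint: "integrable M Y" unfolding Y_def
    by (intro Bochner_Integration.integrable_sum Bochner_Integration.integrable_mult_right xint) auto
  have EY: "expectation Y = (\<Sum>j<n. w j * expectation (x j))" unfolding Y_def
    by (subst Bochner_Integration.integral_sum) (auto intro!: Bochner_Integration.integrable_mult_right xint)
  have Y2: "(\<lambda>\<omega>. (Y \<omega>)\<^sup>2) = (\<lambda>\<omega>. \<Sum>j<n. \<Sum>k<n. (w j * w k) * (x j \<omega> * x k \<omega>))"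
    by (simp add: Y_def power2_eq_square sum_product mult_ac)
  have Y2int: "integrable M (\<lambda>\<omega>. (Y \<omega>)\<^sup>2)" unfolding Y2
    by (rule dsum_int(1)[of n "\<lambda>j k \<omega>. x j \<omega> * x k \<omega>", OF xxint])
  have EY2: "expectation (\<lambda>\<omega>. (Y \<omega>)\<^sup>2) = S + C"
  proof -
    have "expectation (\<lambda>\<omega>. (Y \<omega>)\<^sup>2) = (\<Sum>j<n. \<Sum>k<n. c j k)" unfolding Y2 c_def
      by (rule dsum_int(2)[of n "\<lambda>j k \<omega>. x j \<omega> * x k \<omega>", OF xxint])
    also have "\<dots> = 1 * S + C"
    proof -
      have e: "\<And>j k. (if j = k then 1 * c j k else c j k) = c j k" by simp
      show ?thesis using split[of 1] unfolding e .
    qed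
    finally show ?thesis by simp
  qed
  have Tint: "integrable M T" unfolding T_def
    by (intro Bochner_Integration.integrable_sum Bochner_Integration.integrable_mult_right EBxi) auto
  have ET: "expectation T = expectation Y" unfolding T_def EY
    apply (subst Bochner_Integration.integral_sum)
    using EBxi EBx p0 by (auto intro!: sum.cong)
  have T2: "(\<lambda>\<omega>. (T \<omega>)\<^sup>2) = (\<lambda>\<omega>. \<Sum>j<n. \<Sum>k<n. (w j / p * (w k / p)) * ((x j \<omega> * x k \<omega>) * (Bin j \<omega> * Bin k \<omega>)))"
    by (simp add: T_def power2_eq_square sum_product mult_ac)
  have T2int: "integrable M (\<lambda>\<omega>. (T \<omega>)\<^sup>2)" unfolding T2
    by (rule dsum_int(1)[of n "\<lambda>j k \<omega>. (x j \<omega> * x k \<omega>) * (Bin j \<omega> * Bin k \<omega>)", OF EBBxxi])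
  have ET2: "expectation (\<lambda>\<omega>. (T \<omega>)\<^sup>2) = (1/p) * S + C"
  proof -
    have "expectation (\<lambda>\<omega>. (T \<omega>)\<^sup>2) = (\<Sum>j<n. \<Sum>k<n. (w j / p * (w k / p)) *
          (expectation (\<lambda>\<omega>. x j \<omega> * x k \<omega>) * (if j = k then p else p\<^sup>2)))" unfolding T2
      by (subst dsum_int(2)[of n "\<lambda>j k \<omega>. (x j \<omega> * x k \<omega>) * (Bin j \<omega> * Bin k \<omega>)", OF EBBxxi])
         (auto intro!: sum.cong simp: EBBxx)
    also have "\<dots> = (\<Sum>j<n. \<Sum>k<n. (if j = k then (1/p) * c j k else c j k))"
      using p0 by (intro sum.cong refl) (auto simp: c_def power2_eq_square field_simps)
    also have "\<dots> = (1/p) * S + C" by (rule split)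
    finally show ?thesis .
  qed
  have mY: "(\<lambda>v. \<Sum>j<n. w j * v j) \<in> borel_measurable (PiM {..<n} (\<lambda>_. borel :: real measure))"
    by (intro borel_measurable_sum borel_measurable_times measurable_const mc) auto
  have mY2: "(\<lambda>v. (\<Sum>j<n. w j * v j)\<^sup>2) \<in> borel_measurable (PiM {..<n} (\<lambda>_. borel :: real measure))"
    using mY by measurable
  have mB: "(\<lambda>v. v i) \<in> borel_measurable (PiM {..<m} (\<lambda>_. borel :: real measure))"
    using assms(4) by (intro measurable_component_singleton) auto
  have mB2: "(\<lambda>v. v i * v i) \<in> borel_measurable (PiM {..<m} (\<lambda>_. borel :: real measure))"
    by (rule borel_measurable_times[OF mB mB])
  have XvY: "(\<Sum>j<n. w j * Xv \<omega> j) = Y \<omega>" for \<omega> by (simp add: Xv_def Y_def)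
  have CvB: "Cv \<omega> i = Bout i \<omega>" for \<omega> using assms(4) by (simp add: Cv_def)
  have BBi: "integrable M (\<lambda>\<omega>. Bout i \<omega> * Bout i \<omega>)"
  proof (rule integrable_const_bound[where B=1])
    show "AE \<omega> in M. norm (Bout i \<omega> * Bout i \<omega>) \<le> 1"
      using bern(4)[OF bout] by eventually_elim auto
  qed (use Cm in measurable)
  have EBBi: "expectation (\<lambda>\<omega>. Bout i \<omega> * Bout i \<omega>) = p"
  proof -
    have "expectation (\<lambda>\<omega>. Bout i \<omega> * Bout i \<omega>) = expectation (Bout i)"
      using bern(3)[OF bout] Cm by (intro integral_cong_AE) auto
    then show ?thesis using bern(2)[OF bout] by simp
  qed
  note U1 = indep_expect[OF iXC mY mB, unfolded XvY CvB, OF Yint bern(1)[OF bout]]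
  note U2 = indep_expect[OF iXC mY2 mB2, unfolded XvY CvB, OF Y2int BBi]
  have Uint: "integrable M U" unfolding U_def using U1(2) by (rule Bochner_Integration.integrable_mult_right)
  have EU: "expectation U = expectation Y" unfolding U_def using U1(1) bern(2)[OF bout] p0 by simp
  have U2eq: "(\<lambda>\<omega>. (U \<omega>)\<^sup>2) = (\<lambda>\<omega>. (1/p)\<^sup>2 * ((Y \<omega>)\<^sup>2 * (Bout i \<omega> * Bout i \<omega>)))"
    by (simp add: U_def power2_eq_square mult_ac)
  have U2int: "integrable M (\<lambda>\<omega>. (U \<omega>)\<^sup>2)" unfolding U2eq using U2(2)
    by (rule Bochner_Integration.integrable_mult_right)
  have EU2: "expectation (\<lambda>\<omega>. (U \<omega>)\<^sup>2) = (1/p) * (S + C)"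
    unfolding U2eq using U2(1) EBBi EY2 p0 by (simp add: power2_eq_square field_simps)
  have VY: "variance Y = S + C - (expectation Y)\<^sup>2" using variance_eq[OF Yint Y2int] EY2 by simp
  have VT: "variance T = (1/p) * S + C - (expectation Y)\<^sup>2" using variance_eq[OF Tint T2int] ET2 ET by simp
  have VU: "variance U = (1/p) * (S + C) - (expectation Y)\<^sup>2" using variance_eq[OF Uint U2int] EU2 EU by simp
  have eqY: "(\<lambda>\<omega>. \<Sum>j<n. W i j * x j \<omega>) = Y" by (simp add: Y_def w_def)
  have eqT: "(\<lambda>\<omega>. \<Sum>j<n. W i j * ((1 / p) * Bin j \<omega> * x j \<omega>)) = T"
    by (simp add: T_def w_def mult_ac)
  have eqU: "(\<lambda>\<omega>. (1 / p) * Bout i \<omega> * (\<Sum>j<n. W i j * x j \<omega>)) = U"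
    by (simp add: U_def Y_def w_def mult_ac)
  have eqC: "(\<Sum>j<n. \<Sum>k\<in>{..<n} - {j}. W i j * W i k * expectation (\<lambda>\<omega>. x j \<omega> * x k \<omega>)) = C"
    by (simp add: C_def c_def w_def)
  have S0: "S > 0" using assms(10) by (simp add: S_def w_def)
  have V0: "variance Y > 0" using assms(9) by (simp add: Y_def w_def)
  have q1: "1/p > 1" using assms(2,3) by simp
  have fa: "variance Y / ((1/p)*S + C - (expectation Y)\<^sup>2) < 1 \<and>
      (variance Y / ((1/p)*(S+C) - (expectation Y)\<^sup>2) < variance Y / ((1/p)*S + C - (expectation Y)\<^sup>2) \<longleftrightarrow> C > 0)"
    by (rule final_arith[OF q1 S0 VY V0]) simp
  show ?thesis unfolding incons_ratio_def eqY eqT eqU eqC VT VU using fa by simp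
qed

end
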